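(* Suppose $A,B\in M_N(\mathbb C)$ are simultaneously diagonalizable, with a common basis of eigenvectors $v_1,\dots,v_N$, $Av_i=\lambda_iv_i$, $Bv_i=\gamma_iv_i$, all $\lambda_i$ real and positive. Let $u=0$, $\theta=1$, $m\in\mathbb N$, $h=\tau/m$, $\mu_i=\gamma_i/\lambda_i$, let $\lambda_j=\max_i\lambda_i$ and $y_j=-\lambda_jh$. If $\mu_i\in D_{y_j}$ for every $i=1,\dots,N$, then the $\theta$-method is stable.
   Context: Let $\tau>0$ and consider $y'(t)=-Ay(t)+By(t-\tau)$. With $u=0$, $\theta=1$, the $\theta$-method with step $h=\tau/m$ is the recursion $y_{n+1}=y_n+h\big[-Ay_{n+1}+By_{n-m+1}\big]$, $n\ge0$, with arbitrary starting values $y_{-m},\dots,y_0\in\mathbb C^N$; it is called stable if $y_n\to0$ as $n\to\infty$ for every choice of starting values. For $y<0$, $D_y$ is the set of $\mu\in\mathbb C$ such that every root $\xi$ of $\xi^{m+1}-\xi^m=y\,\xi^{m+1}-y\mu\,\xi$ satisfies $|\xi|<1$. *)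

theory Defs
  imports "HOL-Analysis.Analysis"
begin

definition D_set :: "nat \<Rightarrow> real \<Rightarrow> complex set" where
  "D_set m y = {\<mu>. \<forall>\<xi>::complex.
      \<xi>^(m+1) - \<xi>^m = complex_of_real y * \<xi>^(m+1) - complex_of_real y * \<mu> * \<xi> \<longrightarrow> norm \<xi> < 1}"

text \<open>Stability of the theta-method (theta = 1, u = 0) with step h = tau/m:
  every solution y of the recursion, for arbitrary starting values y(-m),...,y(0),
  tends to 0.\<close>
definition theta_stable :: "complex^'n^'n \<Rightarrow> complex^'n^'n \<Rightarrow> real \<Rightarrow> nat \<Rightarrow> bool" where
  "theta_stable A B h m \<longleftrightarrow>
     (\<forall>y :: int \<Rightarrow> complex^'n.
        (\<forall>n::nat. y (int n + 1) = y (int n) +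
            complex_of_real h *s (- (A *v y (int n + 1)) + B *v y (int n - int m + 1)))
        \<longrightarrow> (\<lambda>n::nat. y (int n)) \<longlonglongrightarrow> 0)"

end

theory Submission
  imports Defs "HOL-Complex_Analysis.Complex_Analysis" "HOL-Computational_Algebra.Computational_Algebra"
begin


lemma i1: fixes R T c c' :: real assumes "R\<ge>1" "T\<ge>1" "c\<ge>0" "c'\<ge>c"
  shows "T^2*R*((1+c')*R - c') - 1 - c + c*R \<ge> (c'-c)*T*(R-1)"
proof -
  define P where "P = (1+c')*R - c'"
  have P: "P = 1 + (1+c')*(R-1)" unfolding P_def by (simp add: algebra_simps)
  have Pn: "P \<ge> 0" using P assms by (simp add: mult_nonneg_nonneg)
  have TT: "T^2*R \<ge> T" using assms by (simp add: power2_eq_square) (metis mult_le_cancel_left1 order_trans less_eq_real_def not_one_le_zero mult.commute)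
  have s1: "T^2*R*P \<ge> T*P" using TT Pn by (rule mult_right_mono)
  have s2: "T*P = T + T*c'*(R-1) + T*(R-1)" unfolding P by (simp add: algebra_simps)
  have a1: "T*(R-1) \<ge> 0" "c*T*(R-1) \<ge> 0" "c*(R-1) \<ge> 0" using assms by auto
  have "T^2*R*P - 1 - c + c*R - (c'-c)*T*(R-1) = (T^2*R*P - T*P) + (T*P - T - T*c'*(R-1) - T*(R-1)) + (T-1) + T*(R-1) + c*(R-1) + c*T*(R-1)"
    by (simp add: algebra_simps)
  then have "T^2*R*P - 1 - c + c*R - (c'-c)*T*(R-1) \<ge> 0" using s1 s2 a1 assms by linarith
  then show ?thesis unfolding P_def by linarith
qed
lemma i2: fixes R T c c' :: real assumes "R\<ge>1" "T\<ge>1" "c\<ge>0" "c'\<ge>c"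
  shows "T^2*R*((1+c')*R + c') - 1 - c*(1+R) \<ge> (c'-c)*T*(R+1)"
proof -
  have TR: "T*R \<ge> 1" using assms by (metis mult_mono mult_1_right order_trans zero_le_one less_eq_real_def)
  have a: "T^2*R^2 \<ge> 1" using one_le_power[OF TR, of 2] by (simp add: power_mult_distrib)
  have b: "c'*(R+1)*T*(T*R - 1) \<ge> 0" using assms TR by (intro mult_nonneg_nonneg) auto
  have c: "c*(R+1)*(T-1) \<ge> 0" using assms by auto
  have "T^2*R*((1+c')*R + c') - 1 - c*(1+R) - (c'-c)*T*(R+1) = (T^2*R^2 - 1) + c'*(R+1)*T*(T*R - 1) + c*(R+1)*(T-1)"
    by (simp add: algebra_simps power2_eq_square)
  then show ?thesis using a b c by linarith
qed
lemma F_nonneg: fixes R T c c' a A B :: real assumes "R\<ge>1" "T\<ge>1" "c\<ge>0" "c'\<ge>c" "\<bar>a\<bar> \<le> R"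
  and A: "A = 1 + c - (1+c')*T^2*R^2" and B: "B = c'*T^2 - c"
  shows "A^2 + 2*A*B*a + B^2*R^2 - (c'-c)^2*T^2*(R^2+1-2*a) \<ge> 0"
proof -
  define F where "F = (\<lambda>a. A^2 + 2*A*B*a + B^2*R^2 - (c'-c)^2*T^2*(R^2+1-2*a))"
  have e1: "A + B*R = - (T^2*R*((1+c')*R - c') - 1 - c + c*R)" unfolding A B by (simp add: algebra_simps power2_eq_square)
  have e2: "A - B*R = - (T^2*R*((1+c')*R + c') - 1 - c*(1+R))" unfolding A B by (simp add: algebra_simps power2_eq_square)
  have d1: "0 \<le> (c'-c)*T*(R-1)" using assms by auto
  have d2: "0 \<le> (c'-c)*T*(R+1)" using assms by auto
  have g1: "\<bar>A + B*R\<bar> \<ge> (c'-c)*T*(R-1)" using i1[OF assms(1-4)] e1 d1 by linarith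
  have g2: "\<bar>A - B*R\<bar> \<ge> (c'-c)*T*(R+1)" using i2[OF assms(1-4)] e2 d2 by linarith
  have h1: "(A + B*R)^2 \<ge> ((c'-c)*T*(R-1))^2" using g1 d1
    by (metis abs_le_square_iff abs_of_nonneg)
  have h2: "(A - B*R)^2 \<ge> ((c'-c)*T*(R+1))^2" using g2 d2
    by (metis abs_le_square_iff abs_of_nonneg)
  have F1: "F R \<ge> 0" using h1 unfolding F_def by (simp add: algebra_simps power2_eq_square)
  have F2: "F (-R) \<ge> 0" using h2 unfolding F_def by (simp add: algebra_simps power2_eq_square)
  have id: "2*R*F a = (R+a)*F R + (R-a)*F (-R)" unfolding F_def by (simp add: algebra_simps power2_eq_square)
  have "(R+a)*F R \<ge> 0" "(R-a)*F (-R) \<ge> 0" using F1 F2 assms(5) by (auto intro!: mult_nonneg_nonneg)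
  then have "2*R*F a \<ge> 0" using id by linarith
  then have "F a \<ge> 0" using assms(1) by (simp add: zero_le_mult_iff)
  then show ?thesis unfolding F_def .
qed
lemma keyineq:
  fixes x \<mu> :: complex and c c' :: real and m :: nat
  assumes m: "m \<ge> 1" and x: "norm x \<ge> 1" and c: "0 \<le> c" "c \<le> c'"
    and mu: "\<mu> = (1+c')*x^m - c'*x^(m-1)"
  shows "norm ((1+c)*x^m - c*x^(m-1) - \<mu>) \<le> norm ((1+c) - c*x - cnj \<mu> * x^m)"
proof -
  obtain k where k: "m = Suc k" using m by (cases m) auto
  define R where "R = norm x"
  define T where "T = R^k"
  define A where "A = 1 + c - (1+c')*T^2*R^2"
  define B where "B = c'*T^2 - c"
  have R1: "R \<ge> 1" using x R_def by simp
  have T1: "T \<ge> 1" unfolding T_def using R1 by simp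
  have nxk: "norm (x^k) = T" unfolding T_def R_def by (simp add: norm_power)
  have cx: "cnj x * x = of_real (R^2)" unfolding R_def using complex_norm_square[of x] by (simp add: mult.commute)
  have cxk: "cnj (x^k) * x^k = of_real (T^2)" using complex_norm_square[of "x^k"] nxk by (simp add: mult.commute)
  have L: "(1+c)*x^m - c*x^(m-1) - \<mu> = - of_real (c'-c) * x^k * (x - 1)"
    unfolding mu k by (simp add: algebra_simps)
  have cm: "cnj \<mu> = (1+c') * cnj (x^k) * cnj x - c' * cnj (x^k)"
    unfolding mu k by (simp add: algebra_simps)
  have "cnj \<mu> * x^m = (1+c') * (cnj (x^k) * x^k) * (cnj x * x) - c' * (cnj (x^k) * x^k) * x"
    unfolding cm k by (simp add: algebra_simps)
  also have "\<dots> = of_real ((1+c')*T^2*R^2) - of_real (c'*T^2) * x" unfolding cx cxk by simp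
  finally have cmx: "cnj \<mu> * x^m = of_real ((1+c')*T^2*R^2) - of_real (c'*T^2) * x" .
  have Rt: "(1+c) - c*x - cnj \<mu> * x^m = of_real A + of_real B * x"
    unfolding cmx A_def B_def by (simp add: algebra_simps)
  define a where "a = Re x"
  define b where "b = Im x"
  have Rab: "R^2 = a^2 + b^2" unfolding R_def a_def b_def by (simp add: cmod_power2)
  have aR: "\<bar>a\<bar> \<le> R" unfolding a_def R_def by (rule abs_Re_le_cmod)
  have nL: "norm ((1+c)*x^m - c*x^(m-1) - \<mu>)^2 = (c'-c)^2 * T^2 * ((a-1)^2 + b^2)"
  proof -
    have "norm ((1+c)*x^m - c*x^(m-1) - \<mu>) = \<bar>c'-c\<bar> * T * norm (x - 1)"
      by (simp only: L norm_mult norm_minus_cancel norm_of_real nxk)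
    moreover have "norm (x-1)^2 = (a-1)^2 + b^2" unfolding a_def b_def by (simp add: cmod_power2)
    ultimately show ?thesis by (simp add: power_mult_distrib)
  qed
  have nR: "norm ((1+c) - c*x - cnj \<mu> * x^m)^2 = (A + B*a)^2 + (B*b)^2"
    unfolding Rt a_def b_def by (simp add: cmod_power2)
  have F: "A^2 + 2*A*B*a + B^2*R^2 - (c'-c)^2*T^2*(R^2+1-2*a) \<ge> 0"
    by (rule F_nonneg[OF R1 T1 c aR A_def B_def])
  have "norm ((1+c)*x^m - c*x^(m-1) - \<mu>)^2 \<le> norm ((1+c) - c*x - cnj \<mu> * x^m)^2"
  proof -
    have e1: "(a-1)^2 + b^2 = R^2 + 1 - 2*a" using Rab by (simp add: power2_diff)
    have e2: "(A + B*a)^2 + (B*b)^2 = A^2 + 2*A*B*a + B^2*R^2"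
      using Rab by (simp add: power2_sum power_mult_distrib algebra_simps)
    show ?thesis unfolding nL nR e1 e2 using F by linarith
  qed
  then show ?thesis by (rule power2_le_imp_le) simp
qed

lemma blaschke:
  fixes \<mu> x :: complex and c :: real and m :: nat
  assumes m: "m \<ge> 1" and c: "c \<ge> 0" and x: "norm x > 1"
    and G: "\<And>z::complex. norm z \<ge> 1 \<Longrightarrow> (1+c)*z^m - c*z^(m-1) \<noteq> \<mu>"
  shows "norm ((1+c) - c*x - cnj \<mu> * x^m) < norm ((1+c)*x^m - c*x^(m-1) - \<mu>)"
proof -
  define qq :: "complex poly" where "qq = monom (- of_real c) (m-1) + [:-\<mu>:]"
  define p :: "complex poly" where "p = monom (of_real (1+c)) m + qq"
  have pp: "poly p (z::complex) = (1+c)*z^m - c*z^(m-1) - \<mu>" for z :: complex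
    unfolding p_def qq_def by (simp add: poly_monom)
  have dqq: "degree qq < m" unfolding qq_def using m
    by (intro le_less_trans[OF degree_add_le]) (auto intro: le_less_trans[OF degree_monom_le])
  have c1: "(of_real (1+c) :: complex) \<noteq> 0" using c by (metis of_real_eq_0_iff add_nonneg_eq_0_iff zero_le_one one_neq_zero)
  have dm: "degree (monom (of_real (1+c) :: complex) m) = m" using c1 by (rule degree_monom_eq)
  have dp: "degree p = m" unfolding p_def using dqq dm by (subst degree_add_eq_left) auto
  have lp: "lead_coeff p = of_real (1+c)"
  proof -
    have "lead_coeff p = lead_coeff (qq + monom (of_real (1+c)) m)" by (simp add: p_def add.commute)
    also have "\<dots> = lead_coeff (monom (of_real (1+c) :: complex) m)"
      using dqq dm by (intro lead_coeff_add_le) auto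
    finally show ?thesis using dm by simp
  qed
  obtain r where r: "smult (lead_coeff p) (\<Prod>i<degree p. [:-r i, 1:]) = p"
    using complex_poly_decompose' by blast
  have pf: "poly p (z::complex) = of_real (1+c) * (\<Prod>i<m. z - r i)" for z :: complex
    using arg_cong[OF r, of "\<lambda>q. poly q z"] using lp dp by (simp add: poly_prod)
  have rin: "norm (r i) < 1" if "i < m" for i
  proof (rule ccontr)
    assume "\<not> norm (r i) < 1"
    hence "(1+c)*(r i)^m - c*(r i)^(m-1) \<noteq> \<mu>" using G by simp
    moreover have "poly p (r i) = 0" unfolding pf using that by (auto intro: prod_zero)
    ultimately show False by (simp add: pp)
  qed
  have x0: "x \<noteq> 0" using x by auto
  have star: "(1+c) - c*x - cnj \<mu> * x^m = of_real (1+c) * (\<Prod>i<m. 1 - cnj (r i) * x)"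
  proof -
    have "x^m * cnj (poly p (1 / cnj x)) = (1+c) - c*x - cnj \<mu> * x^m"
    proof -
      obtain k where k: "m = Suc k" using m by (cases m) auto
      show ?thesis unfolding pp k using x0 by (simp add: algebra_simps power_divide field_simps)
    qed
    moreover have "x^m * cnj (poly p (1 / cnj x)) = of_real (1+c) * (\<Prod>i<m. 1 - cnj (r i) * x)"
    proof -
      have "x^m * cnj (poly p (1 / cnj x)) = of_real (1+c) * (x^m * (\<Prod>i<m. 1/x - cnj (r i)))"
        unfolding pf by (simp add: algebra_simps)
      also have "x^m * (\<Prod>i<m. 1/x - cnj (r i)) = (\<Prod>i<m. x * (1/x - cnj (r i)))"
        by (simp add: prod.distrib)
      also have "\<dots> = (\<Prod>i<m. 1 - cnj (r i) * x)" using x0 by (intro prod.cong) (auto simp: field_simps)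
      finally show ?thesis .
    qed
    ultimately show ?thesis by simp
  qed
  have n1: "norm (of_real (1+c) :: complex) = 1+c" by (simp only: norm_of_real) (use c in simp)
  have fac: "norm (1 - cnj (r i) * x) < norm (x - r i)" if "i < m" for i
  proof -
    have "norm (x - r i)^2 - norm (1 - cnj (r i) * x)^2 = (norm x^2 - 1) * (1 - norm (r i)^2)"
      by (simp only: cmod_power2) (simp add: algebra_simps power2_eq_square)
    moreover have "(norm x^2 - 1) * (1 - norm (r i)^2) > 0"
      using x rin[OF that] by (intro mult_pos_pos) (auto simp: power_less_one_iff abs_square_less_1 one_less_power)
    ultimately have "norm (1 - cnj (r i) * x)^2 < norm (x - r i)^2" by linarith
    thus ?thesis by (rule power2_less_imp_less) simp
  qed
  have "(\<Prod>i<m. norm (1 - cnj (r i) * x)) < (\<Prod>i<m. norm (x - r i))"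
  proof (rule prod_mono_strict[of 0])
    show "0 \<in> {..<m}" using m by auto
    show "\<And>i. i \<in> {..<m} \<Longrightarrow> 0 < norm (x - r i)" using fac le_less_trans[OF norm_ge_zero] by blast
  qed (use m fac in \<open>auto intro: less_imp_le\<close>)
  moreover have "norm ((1+c) - c*x - cnj \<mu> * x^m) = (1+c) * (\<Prod>i<m. norm (1 - cnj (r i) * x))"
    unfolding star norm_mult prod_norm n1 ..
  moreover have "norm ((1+c)*x^m - c*x^(m-1) - \<mu>) = (1+c) * (\<Prod>i<m. norm (x - r i))"
    unfolding pp[symmetric] pf norm_mult prod_norm n1 ..
  ultimately show ?thesis using c by simp
qed

definition Gd :: "nat \<Rightarrow> real \<Rightarrow> complex \<Rightarrow> bool" where
  "Gd m c \<mu> \<longleftrightarrow> (\<forall>z::complex. norm z \<ge> 1 \<longrightarrow> of_real (1+c)*z^m - of_real c*z^(m-1) \<noteq> \<mu>)"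

lemma root_bound:
  fixes z :: complex and c :: real
  assumes "norm z \<ge> 1" "c \<ge> 0" "m \<ge> 1"
  shows "norm ((1+c)*z^m - c*z^(m-1)) \<ge> norm z"
proof -
  obtain k where Suc: "m = Suc k" using assms(3) by (cases m) auto
  have e: "(1+c)*z^m - c*z^(m-1) = z^k * ((1+c)*z - c)" unfolding Suc by (simp add: algebra_simps)
  have "norm ((1+c)*z) \<le> norm ((1+c)*z - c) + norm (of_real c :: complex)" by (metis add.commute norm_triangle_sub)
  hence "(1+c)*norm z \<le> norm ((1+c)*z - c) + c" using assms
    by (simp add: norm_mult del: of_real_add)
  moreover have "c * norm z \<ge> c * 1" using assms by (intro mult_left_mono) auto
  moreover have "(1+c)*norm z = norm z + c * norm z" by (simp add: algebra_simps)
  ultimately have h: "norm z \<le> norm ((1+c)*z - c)" by linarith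
  have "norm (z^k) \<ge> 1" using assms by (simp add: norm_power one_le_power)
  hence "norm (z^k) * norm ((1+c)*z - c) \<ge> 1 * norm ((1+c)*z - c)" by (intro mult_right_mono) auto
  then show ?thesis unfolding e norm_mult using h by linarith
qed

lemma open_G:
  assumes m: "m \<ge> 1" and c: "c \<ge> 0" and G: "Gd m c \<mu>"
  shows "\<exists>e>0. \<forall>\<mu>'. norm (\<mu>' - \<mu>) < e \<longrightarrow> Gd m c \<mu>'"
proof -
  define g where "g = (\<lambda>z::complex. (1+c)*z^m - c*z^(m-1))"
  define K where "K = cball (0::complex) (norm \<mu> + 1) - ball 0 1"
  have "compact K" unfolding K_def by (intro compact_diff) auto
  moreover have "continuous_on K g" unfolding g_def by (intro continuous_intros)
  ultimately have "compact (g ` K)" by (metis compact_continuous_image)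
  hence "open (- (g ` K))" by (simp add: compact_imp_closed open_Compl)
  moreover have "\<mu> \<in> - (g ` K)"
  proof
    assume "\<mu> \<in> g ` K"
    then obtain z where z: "z \<in> K" "\<mu> = g z" by auto
    have "norm z \<ge> 1" using z(1) by (simp add: K_def)
    with z(2) G show False unfolding Gd_def g_def by auto
  qed
  ultimately obtain e where e: "e > 0" "ball \<mu> e \<subseteq> - (g ` K)" by (meson open_contains_ball)
  show ?thesis
  proof (intro exI[of _ "min e 1"] conjI allI impI)
    show "min e 1 > 0" using e by simp
    fix \<mu>' assume d: "norm (\<mu>' - \<mu>) < min e 1"
    show "Gd m c \<mu>'"
    proof (rule ccontr)
      assume "\<not> Gd m c \<mu>'"
      then obtain z :: complex where z: "norm z \<ge> 1" and eq: "(1+c)*z^m - c*z^(m-1) = \<mu>'"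
        unfolding Gd_def by blast
      have "norm z \<le> norm \<mu>'" using root_bound[OF z c m] eq by simp
      also have "\<dots> \<le> norm \<mu> + norm (\<mu>' - \<mu>)" by (metis add.commute diff_add_cancel norm_triangle_ineq)
      finally have "z \<in> K" using d z unfolding K_def by auto
      hence "\<mu>' \<in> g ` K" using eq unfolding g_def by auto
      moreover have "\<mu>' \<in> ball \<mu> e" using d by (simp add: dist_norm norm_minus_commute)
      ultimately show False using e by auto
    qed
  qed
qed

lemma nesting:
  assumes m: "m \<ge> 1" and c: "0 \<le> c" "c \<le> c'" and G: "Gd m c \<mu>"
  shows "Gd m c' \<mu>"
proof (rule ccontr)
  assume "\<not> Gd m c' \<mu>"
  then obtain x :: complex where x: "norm x \<ge> 1" and eq: "(1+c')*x^m - c'*x^(m-1) = \<mu>"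
    unfolding Gd_def by blast
  obtain e where e: "e > 0" "\<And>\<mu>'. norm (\<mu>' - \<mu>) < e \<Longrightarrow> Gd m c \<mu>'" using open_G[OF m c(1) G] by blast
  define \<phi> where "\<phi> = (\<lambda>t::real. (1+c')*(of_real (1+t)*x)^m - c'*(of_real (1+t)*x)^(m-1))"
  have "(\<phi> \<longlongrightarrow> \<phi> 0) (at_right 0)" unfolding \<phi>_def by (intro tendsto_intros)
  moreover have "\<phi> 0 = \<mu>" unfolding \<phi>_def eq[symmetric] by simp
  ultimately have "\<forall>\<^sub>F t in at_right 0. dist (\<phi> t) \<mu> < e" using e(1) by (simp add: tendsto_iff)
  then obtain b where b: "b > 0" "\<And>t. 0 < t \<Longrightarrow> t < b \<Longrightarrow> dist (\<phi> t) \<mu> < e"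
    by (auto simp: eventually_at_right_field)
  define t where "t = b/2"
  have t: "0 < t" "t < b" using b unfolding t_def by auto
  define x' where "x' = of_real (1+t) * x"
  define \<mu>' where "\<mu>' = \<phi> t"
  have x': "norm x' > 1"
  proof -
    have "norm x' = (1+t) * norm x" unfolding x'_def using t by (simp add: norm_mult del: of_real_add)
    moreover have "(1+t) * norm x \<ge> 1+t" using t x mult_left_mono[of 1 "norm x" "1+t"] by simp
    ultimately show ?thesis using t by linarith
  qed
  have mu': "\<mu>' = (1+c')*x'^m - c'*x'^(m-1)" unfolding \<mu>'_def \<phi>_def x'_def ..
  have "Gd m c \<mu>'" using b(2)[OF t] e(2) unfolding \<mu>'_def by (simp add: dist_norm)
  hence "\<And>z::complex. norm z \<ge> 1 \<Longrightarrow> (1+c)*z^m - c*z^(m-1) \<noteq> \<mu>'" unfolding Gd_def by blast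
  from blaschke[OF m c(1) x' this]
  have "norm ((1+c) - c*x' - cnj \<mu>' * x'^m) < norm ((1+c)*x'^m - c*x'^(m-1) - \<mu>')" .
  moreover have "norm ((1+c)*x'^m - c*x'^(m-1) - \<mu>') \<le> norm ((1+c) - c*x' - cnj \<mu>' * x'^m)"
    using keyineq[OF m _ c mu'] x' by simp
  ultimately show False by linarith
qed



lemma scalar_stable:
  fixes z :: "int \<Rightarrow> complex" and s :: real and \<mu> :: complex and m :: nat
  assumes m: "m \<ge> 1" and s: "s > 0"
    and rec: "\<And>n::nat. of_real (1+s) * z (int n + 1) = z (int n) + of_real s * \<mu> * z (int n - int m + 1)"
    and nr: "\<And>x::complex. norm x \<le> 1 \<Longrightarrow> of_real (1+s) - x - of_real s * \<mu> * x^m \<noteq> 0"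
  shows "(\<lambda>n::nat. z (int n)) \<longlonglongrightarrow> 0"
proof -
  define w where "w k = z (int k - int m + 1)" for k :: nat
  have wrec: "of_real (1+s) * w (n+m) = w (n+m-1) + of_real s * \<mu> * w n" for n
  proof -
    have "int (n+m) - int m + 1 = int n + 1" by simp
    moreover have "int (n+m-1) - int m + 1 = int n" using m by simp
    ultimately show ?thesis unfolding w_def using rec[of n] by simp
  qed
  define W where "W = Abs_fps w"
  define Qp :: "complex poly" where "Qp = [:of_real (1+s), -1:] - monom (of_real s * \<mu>) m"
  define Q where "Q = fps_of_poly Qp"
  have pQ: "poly Qp x = of_real (1+s) - x - of_real s * \<mu> * x^m" for x
    unfolding Qp_def by (simp add: poly_monom)
  have Qf: "Q = fps_const (of_real (1+s)) - fps_X - fps_const (of_real s * \<mu>) * fps_X^m"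
    unfolding Q_def Qp_def by (simp add: fps_of_poly_diff fps_of_poly_pCons fps_of_poly_monom fps_of_poly_const)
  define P where "P = Q * W"
  have Pn: "P $ N = 0" if "N \<ge> m" for N
  proof -
    define n where "n = N - m"
    have n: "N = n + m" using that unfolding n_def by simp
    have "P = fps_const (of_real (1+s)) * W - fps_X * W - fps_const (of_real s * \<mu>) * (fps_X^m * W)"
      unfolding P_def Qf by (simp add: algebra_simps)
    hence "P $ N = of_real (1+s) * w N - w (N-1) - of_real s * \<mu> * w (N - m)"
      using m that unfolding W_def by (simp add: fps_X_power_mult_nth)
    also have "\<dots> = 0" unfolding n using wrec[of n] by simp
    finally show ?thesis .
  qed
  have rP: "fps_conv_radius P = \<infinity>"
  proof -
    have "conv_radius (fps_nth P) = conv_radius (\<lambda>_. 0 :: complex)"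
      by (rule conv_radius_cong') (use Pn in \<open>auto simp: eventually_at_top_linorder\<close>)
    thus ?thesis by (simp add: fps_conv_radius_def)
  qed
  have ne: "(of_real (1+s) :: complex) \<noteq> 0" using s by (simp only: of_real_eq_0_iff)
  have Qp0: "Qp \<noteq> 0"
  proof
    assume "Qp = 0" hence "poly Qp 0 = 0" by simp
    moreover have "poly Qp 0 = of_real (1+s)" using m by (simp add: pQ power_0_left del: of_real_add)
    ultimately show False using ne by simp
  qed
  define Z where "Z = {x. poly Qp x = 0}"
  have fZ: "finite Z" unfolding Z_def using Qp0 by (rule poly_roots_finite)
  have Zg: "norm x > 1" if "x \<in> Z" for x using that nr[of x] unfolding Z_def pQ by force
  define r where "r = (if Z = {} then 2 else Min (norm ` Z))"
  have r1: "r > 1" unfolding r_def using fZ Zg by auto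
  have rz: "poly Qp x \<noteq> 0" if "norm x < r" for x
  proof
    assume "poly Qp x = 0" hence "x \<in> Z" unfolding Z_def by simp
    hence "r \<le> norm x" unfolding r_def using fZ by (auto intro: Min_le)
    thus False using that by simp
  qed
  have rI: "fps_conv_radius (inverse Q) \<ge> min (ereal r) (fps_conv_radius Q)"
    by (rule fps_conv_radius_inverse) (use rz in \<open>auto simp: Q_def\<close>)
  hence rI': "fps_conv_radius (inverse Q) \<ge> ereal r" by (simp add: Q_def)
  have Q0: "fps_nth Q 0 \<noteq> 0"
  proof -
    have "fps_nth Q 0 = of_real (1+s)" unfolding Q_def Qp_def using m by simp
    thus ?thesis using ne by simp
  qed
  have WP: "W = inverse Q * P"
  proof -
    have "W = (inverse Q * Q) * W" using inverse_mult_eq_1[of Q, OF Q0] by simp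
    thus ?thesis unfolding P_def by (simp add: mult.assoc)
  qed
  have "fps_conv_radius W \<ge> min (fps_conv_radius (inverse Q)) (fps_conv_radius P)"
    unfolding WP by (rule fps_conv_radius_mult)
  hence rW: "fps_conv_radius W \<ge> ereal r" using rI' rP by simp
  have "ereal (norm (1::complex)) < fps_conv_radius W"
  proof -
    have "ereal (norm (1::complex)) = ereal 1" by simp
    also have "ereal 1 < ereal r" using r1 by simp
    also have "\<dots> \<le> fps_conv_radius W" by (rule rW)
    finally show ?thesis .
  qed
  from summable_fps[OF this] have "summable w" unfolding W_def by simp
  hence "w \<longlonglongrightarrow> 0" by (rule summable_LIMSEQ_zero)
  hence "(\<lambda>n. w (n + (m-1))) \<longlonglongrightarrow> 0" by (rule LIMSEQ_ignore_initial_segment)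
  moreover have "w (n + (m-1)) = z (int n)" for n unfolding w_def using m by (simp add: of_nat_diff)
  ultimately show ?thesis by simp
qed

lemma D_to_G:
  assumes m: "m \<ge> 1" and S: "S > 0" and D: "\<mu> \<in> D_set m (- S)"
  shows "Gd m (1/S) \<mu>"
  unfolding Gd_def
proof (intro allI impI)
  fix x :: complex assume x: "norm x \<ge> 1"
  show "of_real (1 + 1/S) * x^m - of_real (1/S) * x^(m-1) \<noteq> \<mu>"
  proof
    assume eq: "of_real (1 + 1/S) * x^m - of_real (1/S) * x^(m-1) = \<mu>"
    obtain k where k: "m = Suc k" using m by (cases m) auto
    have S0: "(of_real S :: complex) \<noteq> 0" using S by simp
    have "x^(m+1) - x^m = complex_of_real (- S) * x^(m+1) - complex_of_real (- S) * \<mu> * x"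
      unfolding eq[symmetric] k using S0 by (simp add: field_simps)
    hence "norm x < 1" using D unfolding D_set_def by blast
    thus False using x by simp
  qed
qed

lemma G_to_nr:
  assumes m: "m \<ge> 1" and s: "s > 0" and G: "Gd m (1/s) \<mu>" and x: "norm x \<le> 1"
  shows "of_real (1+s) - x - of_real s * \<mu> * x^m \<noteq> 0"
proof
  assume eq0: "of_real (1+s) - x - of_real s * \<mu> * x^m = 0"
  obtain k where k: "m = Suc k" using m by (cases m) auto
  have s0: "(of_real s :: complex) \<noteq> 0" using s by simp
  show False
  proof (cases "x = 0")
    case True
    have ne: "(of_real (1+s) :: complex) \<noteq> 0" using s by (simp only: of_real_eq_0_iff)
    then show False using eq0 k True by simp
  next
    case False
    define \<xi> where "\<xi> = 1 / x"
    have n\<xi>: "norm \<xi> \<ge> 1" unfolding \<xi>_def using x False by (simp add: norm_divide)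
    have mu: "\<mu> = (of_real (1+s) - x) / (of_real s * x^m)"
      using eq0 False s0 by (simp add: field_simps)
    have "of_real (1 + 1/s) * \<xi>^m - of_real (1/s) * \<xi>^(m-1) = \<mu>"
      unfolding mu \<xi>_def k using False s0 by (simp add: field_simps)
    with G n\<xi> show False unfolding Gd_def by blast
  qed
qed

lemma mvneg: "M *v (- x) = - (M *v (x :: 'a::ring_1^'n))"
  by (simp add: vec_eq_iff matrix_vector_mult_def sum_negf)

lemma eigV:
  fixes M :: "complex^'n^'n" and v :: "'n \<Rightarrow> complex^'n" and f :: "'n \<Rightarrow> complex"
  assumes "\<And>i. M *v v i = f i *s v i"
  shows "M *v ((\<chi> r c. v c $ r) *v x) = (\<chi> r c. v c $ r) *v (\<chi> i. f i * x$i)"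
proof -
  have "(M *v ((\<chi> r c. v c $ r) *v x)) $ r = (\<Sum>c\<in>UNIV. (M *v v c)$r * x$c)" for r
    by (simp add: matrix_vector_mult_def sum_distrib_left sum_distrib_right mult_ac) (rule sum.swap)
  then show ?thesis using assms by (simp add: vec_eq_iff matrix_vector_mult_def mult_ac)
qed

theorem mainTheorem12:
  fixes A B :: "complex^'n^'n"
    and v :: "'n \<Rightarrow> complex^'n"
    and lam :: "'n \<Rightarrow> real" and \<gamma> :: "'n \<Rightarrow> complex"
    and \<tau> :: real and m :: nat
  assumes tau_pos: "\<tau> > 0"
    and m_pos: "m \<ge> 1"
    and basis: "\<And>c :: 'n \<Rightarrow> complex. (\<Sum>i\<in>UNIV. c i *s v i) = 0 \<Longrightarrow> (\<forall>i. c i = 0)"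
    and eigA: "\<And>i. A *v v i = complex_of_real (lam i) *s v i"
    and eigB: "\<And>i. B *v v i = \<gamma> i *s v i"
    and lam_pos: "\<And>i. lam i > 0"
    and inD: "\<And>i. \<gamma> i / complex_of_real (lam i)
                 \<in> D_set m (- (Max (range lam)) * (\<tau> / real m))"
  shows "theta_stable A B (\<tau> / real m) m"
proof -
  define h where "h = \<tau> / real m"
  have h: "h > 0" using tau_pos m_pos by (simp add: h_def)
  define L where "L = Max (range lam)"
  have fin: "finite (range lam)" by simp
  have lamL: "lam i \<le> L" for i unfolding L_def using fin by (auto intro: Max_ge)
  define V :: "complex^'n^'n" where "V = (\<chi> r c. v c $ r)"
  have Vsum: "V *v x = (\<Sum>i\<in>UNIV. x$i *s v i)" for x
    by (simp add: vec_eq_iff matrix_vector_mult_def V_def mult.commute)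
  have Vinj: "\<forall>x. V *v x = 0 \<longrightarrow> x = 0"
  proof (intro allI impI)
    fix x assume "V *v x = 0"
    hence "\<forall>i. x$i = 0" using basis[of "\<lambda>i. x$i"] Vsum by simp
    thus "x = 0" by (simp add: vec_eq_iff)
  qed
  obtain Vi :: "complex^'n^'n" where Vi: "Vi ** V = mat 1" using matrix_left_invertible_ker[of V] Vinj by blast
  have Vi2: "V ** Vi = mat 1" using Vi matrix_left_right_inverse by blast
  have ViV: "Vi *v (V *v u) = u" for u by (simp add: matrix_vector_mul_assoc Vi)
  show ?thesis unfolding theta_stable_def
  proof (intro allI impI)
    fix y :: "int \<Rightarrow> complex^'n"
    assume rec: "\<forall>n::nat. y (int n + 1) = y (int n) + complex_of_real (\<tau> / real m) *s
            (- (A *v y (int n + 1)) + B *v y (int n - int m + 1))"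
    define c where "c k = Vi *v y k" for k
    have yc: "y k = V *v c k" for k unfolding c_def by (simp add: matrix_vector_mul_assoc Vi2)
    have crec: "c (int n + 1) $ i = c (int n) $ i + of_real h * (- (of_real (lam i) * c (int n + 1) $ i)
                  + \<gamma> i * c (int n - int m + 1) $ i)" for n i
    proof -
      have "c (int n + 1) = Vi *v (y (int n) + of_real h *s (-(A *v y (int n + 1)) + B *v y (int n - int m + 1)))"
        using rec unfolding c_def h_def by simp
      also have "\<dots> = c (int n) + of_real h *s (-(\<chi> i. of_real (lam i) * c (int n + 1)$i) + (\<chi> i. \<gamma> i * c (int n - int m + 1)$i))"
        unfolding yc V_def eigV[of A v "\<lambda>i. of_real (lam i)", OF eigA] eigV[of B v \<gamma>, OF eigB]
        by (simp add: matrix_vector_right_distrib matrix_vector_mult_diff_distrib vector_scalar_commute mvneg ViV[unfolded V_def])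
      finally have E: "c (int n + 1) = c (int n) + of_real h *s (-(\<chi> i. of_real (lam i) * c (int n + 1)$i) + (\<chi> i. \<gamma> i * c (int n - int m + 1)$i))" .
      have E2: "(c (int n) + of_real h *s (-(\<chi> i. of_real (lam i) * c (int n + 1)$i) + (\<chi> i. \<gamma> i * c (int n - int m + 1)$i))) $ i
          = c (int n) $ i + of_real h * (- (of_real (lam i) * c (int n + 1) $ i) + \<gamma> i * c (int n - int m + 1) $ i)"
        by (simp add: algebra_simps)
      show ?thesis using arg_cong[OF E, of "\<lambda>u. u $ i"] E2 by (rule trans)
    qed
    have zlim: "(\<lambda>n. c (int n) $ i) \<longlonglongrightarrow> 0" for i
    proof -
      define s where "s = lam i * h"
      define \<mu> where "\<mu> = \<gamma> i / of_real (lam i)"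
      have s: "s > 0" unfolding s_def using lam_pos[of i] h by simp
      have Lh: "L * h > 0" using lamL[of i] lam_pos[of i] h by simp
      have sL: "s \<le> L * h" unfolding s_def using lamL[of i] h by (simp add: mult_right_mono)
      have eqy: "- (Max (range lam)) * (\<tau> / real m) = - (L*h)" unfolding L_def h_def by (simp only: mult_minus_left)
      have "\<mu> \<in> D_set m (- (L*h))" using inD[of i] unfolding \<mu>_def eqy .
      hence G1: "Gd m (1/(L*h)) \<mu>" by (rule D_to_G[OF m_pos Lh])
      have "1/(L*h) \<le> 1/s" using s sL by (simp add: frac_le)
      hence G2: "Gd m (1/s) \<mu>" using Lh by (intro nesting[OF m_pos _ _ G1]) auto
      have nr: "\<And>x::complex. norm x \<le> 1 \<Longrightarrow> of_real (1+s) - x - of_real s * \<mu> * x^m \<noteq> 0"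
        by (rule G_to_nr[OF m_pos s G2])
      have l0: "(of_real (lam i) :: complex) \<noteq> 0" using lam_pos[of i] by simp
      have srec: "of_real (1+s) * c (int n + 1) $ i = c (int n) $ i + of_real s * \<mu> * c (int n - int m + 1) $ i" for n
        using crec[of n i] l0 unfolding s_def \<mu>_def by (simp add: field_simps)
      show ?thesis by (rule scalar_stable[OF m_pos s srec nr])
    qed
    show "(\<lambda>n::nat. y (int n)) \<longlonglongrightarrow> 0"
      unfolding yc
    proof (rule vec_tendstoI)
      fix j
      have "(\<lambda>n. \<Sum>i\<in>UNIV. V $ j $ i * c (int n) $ i) \<longlonglongrightarrow> (\<Sum>i\<in>UNIV. V $ j $ i * 0)"
        by (intro tendsto_intros zlim)
      thus "(\<lambda>n. (V *v c (int n)) $ j) \<longlonglongrightarrow> (0 :: complex^'n) $ j"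
        by (simp add: matrix_vector_mult_def)
    qed
  qed
qed

end
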